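(* Let $n \geq 2$ and let $\lambda = (\lambda_1, \ldots, \lambda_n)$ be a partition with $n$ parts. Then \[ A_\lambda(n) = \sum_{j=1}^n \binom{\lambda_1 - \lambda_2 + j - 1}{\lambda_1 - \lambda_2} R(\lambda, j). \]
   Context: Six-vertex model: on a grid with $r$ rows and $c$ columns there are $r$ horizontal lines and $c$ vertical lines meeting in $rc$ vertices. Each horizontal line consists of $c+1$ edges (the outermost ones are a left and a right boundary edge) and each vertical line of $r+1$ edges (the outermost ones are a top and a bottom boundary edge). A state assigns an orientation to every edge, agreeing with prescribed orientations on the boundary edges, such that at every vertex exactly two of the four adjacent edges point into the vertex and two point out. A partition $\lambda=(\lambda_1,\dots,\lambda_n)$ means integers $\lambda_1 \geq \cdots \geq \lambda_n \geq 0$. $A_\lambda(n)$ is the number of states on the grid with $n$ rows and $n + \lambda_1$ columns with boundary conditions: left boundary arrows point right, right boundary arrows point left, bottom boundary arrows point down, and, numbering columns $1, \ldots, n+\lambda_1$ from right to left, the top boundary arrow in column $i$ points up if $i \in \{\lambda_k + n + 1 - k : 1 \leq k \leq n\}$ and down otherwise. Number rows $1,\dots,n$ from top to bottom. $R(\lambda, j)$ is the number of states on the grid formed by the rightmost $n + \lambda_2 - 1$ columns (columns $1, \ldots, n+\lambda_2-1$) with boundary conditions: the top, bottom and right boundary arrows are as in the model for $A_\lambda(n)$ (top arrow of column $i$ up iff $i \in \{\lambda_k + n+1-k\}$, bottom down, right boundary pointing left), and on the left boundary of this subgrid the arrow in row $j$ points left while all other arrows point right. *)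

theory Defs
  imports Main
begin

text \<open>Six-vertex model on a grid with r rows (numbered 1..r from top to bottom) and
c columns (numbered 1..c from right to left).

Horizontal edges: in row i, the edge with position k (0 \<le> k \<le> c) lies between
column k and column k+1; position 0 is the right boundary edge, position c the left
boundary edge.  h i k = True means the edge points right, False means it points left.

Vertical edges: in column j, the edge with position k (0 \<le> k \<le> r) lies between
row k and row k+1; position 0 is the top boundary edge, position r the bottom boundary
edge.  v j k = True means the edge points up, False means it points down.

Outside the index range the functions are required to be False, so that states are
finite objects.  Boundary data: L i / R i (left / right boundary of row i, True = points
right), T j / B j (top / bottom boundary of column j, True = points up).\<close>

definition six_vertex_states ::
  "nat \<Rightarrow> nat \<Rightarrow> (nat \<Rightarrow> bool) \<Rightarrow> (nat \<Rightarrow> bool) \<Rightarrow> (nat \<Rightarrow> bool) \<Rightarrow> (nat \<Rightarrow> bool)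
   \<Rightarrow> ((nat \<Rightarrow> nat \<Rightarrow> bool) \<times> (nat \<Rightarrow> nat \<Rightarrow> bool)) set" where
  "six_vertex_states r c L R T B =
    {(h, v).
      (\<forall>i k. h i k \<longrightarrow> 1 \<le> i \<and> i \<le> r \<and> k \<le> c) \<and>
      (\<forall>j k. v j k \<longrightarrow> 1 \<le> j \<and> j \<le> c \<and> k \<le> r) \<and>
      (\<forall>i\<in>{1..r}. h i c = L i \<and> h i 0 = R i) \<and>
      (\<forall>j\<in>{1..c}. v j 0 = T j \<and> v j r = B j) \<and>
      (\<forall>i\<in>{1..r}. \<forall>j\<in>{1..c}.
         of_bool (\<not> v j (i - 1))   \<comment> \<open>top edge points down, into the vertex\<close>
       + of_bool (v j i)             \<comment> \<open>bottom edge points up, into the vertex\<close>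
       + of_bool (\<not> h i (j - 1))   \<comment> \<open>right edge points left, into the vertex\<close>
       + of_bool (h i j)             \<comment> \<open>left edge points right, into the vertex\<close>
       = (2::nat))}"

definition is_partition :: "nat \<Rightarrow> (nat \<Rightarrow> nat) \<Rightarrow> bool" where
  "is_partition n lam \<longleftrightarrow> (\<forall>k. 1 \<le> k \<and> k < n \<longrightarrow> lam (Suc k) \<le> lam k)"

definition top_up :: "nat \<Rightarrow> (nat \<Rightarrow> nat) \<Rightarrow> nat set" where
  "top_up n lam = {lam k + n + 1 - k | k. 1 \<le> k \<and> k \<le> n}"

definition A_count :: "(nat \<Rightarrow> nat) \<Rightarrow> nat \<Rightarrow> nat" where
  "A_count lam n = card (six_vertex_states n (n + lam 1)
      (\<lambda>_. True) (\<lambda>_. False) (\<lambda>i. i \<in> top_up n lam) (\<lambda>_. False))"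

definition R_count :: "nat \<Rightarrow> (nat \<Rightarrow> nat) \<Rightarrow> nat \<Rightarrow> nat" where
  "R_count n lam j = card (six_vertex_states n (n + lam 2 - 1)
      (\<lambda>i. i \<noteq> j) (\<lambda>_. False) (\<lambda>i. i \<in> top_up n lam) (\<lambda>_. False))"

end

theory Submission
  imports Defs
begin
lemma sv_cong:
  assumes "\<And>i. 1 \<le> i \<Longrightarrow> i \<le> r \<Longrightarrow> L i = L' i"
      "\<And>i. 1 \<le> i \<Longrightarrow> i \<le> r \<Longrightarrow> R i = R' i"
      "\<And>j. 1 \<le> j \<Longrightarrow> j \<le> c \<Longrightarrow> T j = T' j"
      "\<And>j. 1 \<le> j \<Longrightarrow> j \<le> c \<Longrightarrow> B j = B' j"
  shows "six_vertex_states r c L R T B = six_vertex_states r c L' R' T' B'"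
  using assms unfolding six_vertex_states_def by auto

lemma finite_pred2: "finite A \<Longrightarrow> finite {h::nat\<Rightarrow>nat\<Rightarrow>bool. \<forall>i k. h i k \<longrightarrow> (i,k) \<in> A}"
proof -
  assume fA: "finite A"
  have "{h::nat\<Rightarrow>nat\<Rightarrow>bool. \<forall>i k. h i k \<longrightarrow> (i,k) \<in> A} \<subseteq> (\<lambda>S i k. (i,k) \<in> S) ` Pow A"
  proof
    fix h assume "h \<in> {h::nat\<Rightarrow>nat\<Rightarrow>bool. \<forall>i k. h i k \<longrightarrow> (i,k) \<in> A}"
    then have "h = (\<lambda>i k. (i,k) \<in> {p\<in>A. h (fst p) (snd p)})" by auto
    then show "h \<in> (\<lambda>S i k. (i,k) \<in> S) ` Pow A" by blast
  qed
  then show ?thesis using fA by (meson finite_Pow_iff finite_imageI finite_subset)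
qed

lemma finite_sv: "finite (six_vertex_states r c L R T B)"
proof -
  have "six_vertex_states r c L R T B \<subseteq> {h. \<forall>i k. h i k \<longrightarrow> (i,k) \<in> {0..r}\<times>{0..c}} \<times> {v. \<forall>i k. v i k \<longrightarrow> (i,k) \<in> {0..c}\<times>{0..r}}"
    unfolding six_vertex_states_def by auto
  moreover have "finite ({h. \<forall>i k. h i k \<longrightarrow> (i,k) \<in> {0..r}\<times>{0..c}} \<times> {v. \<forall>i k. v i k \<longrightarrow> (i,k) \<in> {0..c}\<times>{0..r}})"
    by (intro finite_cartesian_product[OF finite_pred2 finite_pred2] finite_cartesian_product finite_atLeastAtMost)
  ultimately show ?thesis by (rule finite_subset)
qed

definition Xs :: "nat \<Rightarrow> (nat \<Rightarrow> bool) set" where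
  "Xs r = {X. \<forall>i. X i \<longrightarrow> 1 \<le> i \<and> i \<le> r}"

lemma finite_Xs: "finite (Xs r)"
proof -
  have "Xs r \<subseteq> (\<lambda>S i. i \<in> S) ` Pow {1..r}"
  proof
    fix X assume "X \<in> Xs r"
    then have "X = (\<lambda>i. i \<in> {i\<in>{1..r}. X i})" unfolding Xs_def by auto
    then show "X \<in> (\<lambda>S i. i \<in> S) ` Pow {1..r}" by blast
  qed
  moreover have "finite ((\<lambda>S i. i \<in> S) ` Pow {1..(r::nat)})" by simp
  ultimately show ?thesis by (rule finite_subset)
qed

lemma sv_iff: "(h, v) \<in> six_vertex_states r c L R T B \<longleftrightarrow>
      (\<forall>i k. h i k \<longrightarrow> 1 \<le> i \<and> i \<le> r \<and> k \<le> c) \<and>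
      (\<forall>j k. v j k \<longrightarrow> 1 \<le> j \<and> j \<le> c \<and> k \<le> r) \<and>
      (\<forall>i\<in>{1..r}. h i c = L i \<and> h i 0 = R i) \<and>
      (\<forall>j\<in>{1..c}. v j 0 = T j \<and> v j r = B j) \<and>
      (\<forall>i\<in>{1..r}. \<forall>j\<in>{1..c}.
         of_bool (\<not> v j (i - 1)) + of_bool (v j i) + of_bool (\<not> h i (j - 1)) + of_bool (h i j) = (2::nat))"
  by (simp add: six_vertex_states_def)

lemma svD:
  assumes "(h, v) \<in> six_vertex_states r c L R T B"
  shows "\<And>i k. h i k \<Longrightarrow> 1 \<le> i \<and> i \<le> r \<and> k \<le> c"
    "\<And>j k. v j k \<Longrightarrow> 1 \<le> j \<and> j \<le> c \<and> k \<le> r"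
    "\<And>i. 1 \<le> i \<Longrightarrow> i \<le> r \<Longrightarrow> h i c = L i"
    "\<And>i. 1 \<le> i \<Longrightarrow> i \<le> r \<Longrightarrow> h i 0 = R i"
    "\<And>j. 1 \<le> j \<Longrightarrow> j \<le> c \<Longrightarrow> v j 0 = T j"
    "\<And>j. 1 \<le> j \<Longrightarrow> j \<le> c \<Longrightarrow> v j r = B j"
    "\<And>i j. 1 \<le> i \<Longrightarrow> i \<le> r \<Longrightarrow> 1 \<le> j \<Longrightarrow> j \<le> c \<Longrightarrow>
       of_bool (\<not> v j (i - 1)) + of_bool (v j i) + of_bool (\<not> h i (j - 1)) + of_bool (h i j) = (2::nat)"
  using assms unfolding sv_iff by auto

lemma svI:
  assumes "\<And>i k. h i k \<Longrightarrow> 1 \<le> i \<and> i \<le> r \<and> k \<le> c"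
    "\<And>j k. v j k \<Longrightarrow> 1 \<le> j \<and> j \<le> c \<and> k \<le> r"
    "\<And>i. 1 \<le> i \<Longrightarrow> i \<le> r \<Longrightarrow> h i c = L i \<and> h i 0 = R i"
    "\<And>j. 1 \<le> j \<Longrightarrow> j \<le> c \<Longrightarrow> v j 0 = T j \<and> v j r = B j"
    "\<And>i j. 1 \<le> i \<Longrightarrow> i \<le> r \<Longrightarrow> 1 \<le> j \<Longrightarrow> j \<le> c \<Longrightarrow>
       of_bool (\<not> v j (i - 1)) + of_bool (v j i) + of_bool (\<not> h i (j - 1)) + of_bool (h i j) = (2::nat)"
  shows "(h, v) \<in> six_vertex_states r c L R T B"
  unfolding sv_iff using assms by simp

definition lpart :: "nat \<Rightarrow> (nat\<Rightarrow>nat\<Rightarrow>bool) \<times> (nat\<Rightarrow>nat\<Rightarrow>bool) \<Rightarrow> (nat\<Rightarrow>nat\<Rightarrow>bool) \<times> (nat\<Rightarrow>nat\<Rightarrow>bool)" where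
  "lpart c1 s = (\<lambda>i k. fst s i (k + c1), \<lambda>t k. 0 < t \<and> snd s (t + c1) k)"
definition rpart :: "nat \<Rightarrow> (nat\<Rightarrow>nat\<Rightarrow>bool) \<times> (nat\<Rightarrow>nat\<Rightarrow>bool) \<Rightarrow> (nat\<Rightarrow>nat\<Rightarrow>bool) \<times> (nat\<Rightarrow>nat\<Rightarrow>bool)" where
  "rpart c1 s = (\<lambda>i k. fst s i k \<and> k \<le> c1, \<lambda>t k. snd s t k \<and> t \<le> c1)"
definition glue :: "nat \<Rightarrow> (nat\<Rightarrow>nat\<Rightarrow>bool) \<times> (nat\<Rightarrow>nat\<Rightarrow>bool) \<Rightarrow> (nat\<Rightarrow>nat\<Rightarrow>bool) \<times> (nat\<Rightarrow>nat\<Rightarrow>bool) \<Rightarrow> (nat\<Rightarrow>nat\<Rightarrow>bool) \<times> (nat\<Rightarrow>nat\<Rightarrow>bool)" where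
  "glue c1 sl sr = (\<lambda>i k. if k \<le> c1 then fst sr i k else fst sl i (k - c1),
                    \<lambda>t k. if t \<le> c1 then snd sr t k else snd sl (t - c1) k)"

lemma lpart_mem:
  assumes "(h, v) \<in> six_vertex_states r (c1 + c2) L R T B"
  shows "lpart c1 (h, v) \<in> six_vertex_states r c2 L (\<lambda>i. 1 \<le> i \<and> i \<le> r \<and> h i c1) (\<lambda>t. T (t + c1)) (\<lambda>t. B (t + c1))"
proof -
  note A = assms[unfolded sv_iff]
  have V: "of_bool (\<not> (0 < t \<and> v (t + c1) (i - 1))) + of_bool (0 < t \<and> v (t + c1) i) + of_bool (\<not> h i (t - 1 + c1)) + of_bool (h i (t + c1)) = (2::nat)"
    if "1 \<le> i" "i \<le> r" "1 \<le> t" "t \<le> c2" for i t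
  proof -
    have e: "t - 1 + c1 = t + c1 - 1" using that by simp
    have "t + c1 \<in> {1..c1+c2}" using that by simp
    then have "of_bool (\<not> v (t + c1) (i - 1)) + of_bool (v (t + c1) i) + of_bool (\<not> h i (t + c1 - 1)) + of_bool (h i (t + c1)) = (2::nat)"
      using svD(7)[OF assms] that by simp
    then show ?thesis using that e by simp
  qed
  have S1: "\<forall>i k. h i (k + c1) \<longrightarrow> 1 \<le> i \<and> i \<le> r \<and> k \<le> c2" using svD(1,2)[OF assms] by fastforce
  have S2: "\<forall>t k. 0 < t \<and> v (t + c1) k \<longrightarrow> 1 \<le> t \<and> t \<le> c2 \<and> k \<le> r" using svD(1,2)[OF assms] by fastforce
  have B1: "\<forall>i\<in>{1..r}. h i (c2 + c1) = L i \<and> h i (0 + c1) = (1 \<le> i \<and> i \<le> r \<and> h i c1)"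
    using A by (simp add: add.commute)
  have B2: "\<forall>t\<in>{1..c2}. (0 < t \<and> v (t + c1) 0) = T (t + c1) \<and> (0 < t \<and> v (t + c1) r) = B (t + c1)"
  proof
    fix t assume t: "t \<in> {1..c2}"
    then have "t + c1 \<in> {1..c1+c2}" by simp
    then show "(0 < t \<and> v (t + c1) 0) = T (t + c1) \<and> (0 < t \<and> v (t + c1) r) = B (t + c1)" using A t by auto
  qed
  show ?thesis unfolding lpart_def sv_iff fst_conv snd_conv using S1 S2 B1 B2 V by auto
qed

lemma rpart_mem:
  assumes "(h, v) \<in> six_vertex_states r (c1 + c2) L R T B"
  shows "rpart c1 (h, v) \<in> six_vertex_states r c1 (\<lambda>i. 1 \<le> i \<and> i \<le> r \<and> h i c1) R T B"
proof -
  note A = assms[unfolded sv_iff]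
  have V: "of_bool (\<not> (v t (i - 1) \<and> t \<le> c1)) + of_bool (v t i \<and> t \<le> c1) + of_bool (\<not> (h i (t - 1) \<and> t - 1 \<le> c1)) + of_bool (h i t \<and> t \<le> c1) = (2::nat)"
    if "1 \<le> i" "i \<le> r" "1 \<le> t" "t \<le> c1" for i t
  proof -
    have "t \<in> {1..c1+c2}" using that by simp
    then have "of_bool (\<not> v t (i - 1)) + of_bool (v t i) + of_bool (\<not> h i (t - 1)) + of_bool (h i t) = (2::nat)"
      using svD(7)[OF assms] that by simp
    moreover have "t - 1 \<le> c1" using that by simp
    ultimately show ?thesis using that by simp
  qed
  have S1: "\<forall>i k. h i k \<and> k \<le> c1 \<longrightarrow> 1 \<le> i \<and> i \<le> r \<and> k \<le> c1" using svD(1,2)[OF assms] by fastforce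
  have S2: "\<forall>t k. v t k \<and> t \<le> c1 \<longrightarrow> 1 \<le> t \<and> t \<le> c1 \<and> k \<le> r" using svD(1,2)[OF assms] by fastforce
  have B2: "\<forall>t\<in>{1..c1}. (v t 0 \<and> t \<le> c1) = T t \<and> (v t r \<and> t \<le> c1) = B t" using A by auto
  show ?thesis unfolding rpart_def sv_iff fst_conv snd_conv using S1 S2 B2 V A by auto
qed

lemma glue_mem:
  assumes X: "X \<in> Xs r"
    and l: "(hl, vl) \<in> six_vertex_states r c2 L X (\<lambda>t. T (t + c1)) (\<lambda>t. B (t + c1))"
    and rr: "(hr, vr) \<in> six_vertex_states r c1 X R T B"
  shows "glue c1 (hl, vl) (hr, vr) \<in> six_vertex_states r (c1 + c2) L R T B"
    "lpart c1 (glue c1 (hl, vl) (hr, vr)) = (hl, vl)"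
    "rpart c1 (glue c1 (hl, vl) (hr, vr)) = (hr, vr)"
proof -
  note Lq = svD[OF l] and Rq = svD[OF rr]
  have Xr: "\<And>i. X i \<Longrightarrow> 1 \<le> i \<and> i \<le> r" using X unfolding Xs_def by auto
  have hl0: "hl i 0 = X i" for i
    using Lq(4)[of i] Lq(1)[of i 0] Xr[of i] by (cases "1 \<le> i \<and> i \<le> r") auto
  have hrc: "hr i c1 = X i" for i
    using Rq(3)[of i] Rq(1)[of i c1] Xr[of i] by (cases "1 \<le> i \<and> i \<le> r") auto
  define h where "h = (\<lambda>i k. if k \<le> c1 then hr i k else hl i (k - c1))"
  define v where "v = (\<lambda>t k. if t \<le> c1 then vr t k else vl (t - c1) k)"
  have g: "glue c1 (hl, vl) (hr, vr) = (h, v)" unfolding glue_def h_def v_def by simp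
  have V: "of_bool (\<not> v t (i - 1)) + of_bool (v t i) + of_bool (\<not> h i (t - 1)) + of_bool (h i t) = (2::nat)"
    if "1 \<le> i" "i \<le> r" "1 \<le> t" "t \<le> c1 + c2" for i t
  proof (cases "t \<le> c1")
    case True
    then have "of_bool (\<not> vr t (i - 1)) + of_bool (vr t i) + of_bool (\<not> hr i (t - 1)) + of_bool (hr i t) = (2::nat)"
      using Rq(7)[of i t] that by auto
    moreover have "v t (i - 1) = vr t (i - 1)" "v t i = vr t i" "h i (t - 1) = hr i (t - 1)" "h i t = hr i t"
      using True unfolding h_def v_def by auto
    ultimately show ?thesis by simp
  next
    case False
    define t' where "t' = t - c1"
    have t': "t' \<in> {1..c2}" "t = t' + c1" using False that unfolding t'_def by auto
    have "of_bool (\<not> vl t' (i - 1)) + of_bool (vl t' i) + of_bool (\<not> hl i (t' - 1)) + of_bool (hl i t') = (2::nat)"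
      using Lq(7)[of i t'] that t' by auto
    moreover have "h i (t - 1) = hl i (t' - 1)"
    proof (cases "t' = 1")
      case True then show ?thesis using t' hl0 hrc unfolding h_def by simp
    next
      case False
      then have "\<not> t - 1 \<le> c1" "t - 1 - c1 = t' - 1" using t' by auto
      then show ?thesis unfolding h_def by simp
    qed
    ultimately show ?thesis using t' unfolding h_def v_def by simp
  qed
  have S1: "\<forall>i k. h i k \<longrightarrow> 1 \<le> i \<and> i \<le> r \<and> k \<le> c1 + c2"
  proof (intro allI impI)
    fix i k assume "h i k"
    then show "1 \<le> i \<and> i \<le> r \<and> k \<le> c1 + c2"
      unfolding h_def by (cases "k \<le> c1") (use Lq(1)[of i "k-c1"] Rq(1)[of i k] in auto)
  qed
  have S2: "\<forall>t k. v t k \<longrightarrow> 1 \<le> t \<and> t \<le> c1 + c2 \<and> k \<le> r"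
  proof (intro allI impI)
    fix t k assume "v t k"
    then show "1 \<le> t \<and> t \<le> c1 + c2 \<and> k \<le> r"
      unfolding v_def by (cases "t \<le> c1") (use Lq(2)[of "t-c1" k] Rq(2)[of t k] in auto)
  qed
  have B1: "\<forall>i\<in>{1..r}. h i (c1 + c2) = L i \<and> h i 0 = R i"
  proof
    fix i assume i: "i \<in> {1..r}"
    have "h i (c1 + c2) = L i"
    proof (cases "c2 = 0")
      case True then show ?thesis using i hrc[of i] hl0[of i] Lq(3)[of i] unfolding h_def by simp
    next
      case False then show ?thesis using i Lq(3)[of i] unfolding h_def by simp
    qed
    moreover have "h i 0 = R i" using i Rq(4)[of i] unfolding h_def by simp
    ultimately show "h i (c1 + c2) = L i \<and> h i 0 = R i" by simp
  qed
  have B2: "\<forall>t\<in>{1..c1 + c2}. v t 0 = T t \<and> v t r = B t"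
  proof
    fix t assume t: "t \<in> {1..c1 + c2}"
    show "v t 0 = T t \<and> v t r = B t"
    proof (cases "t \<le> c1")
      case True then show ?thesis using t Rq(5,6)[of t] unfolding v_def by auto
    next
      case False
      then have "t - c1 \<in> {1..c2}" using t by auto
      then show ?thesis using False Lq(5,6)[of "t - c1"] unfolding v_def by auto
    qed
  qed
  show "glue c1 (hl, vl) (hr, vr) \<in> six_vertex_states r (c1 + c2) L R T B"
    unfolding g by (rule svI) (use S1 S2 B1 B2 V in auto)
  show "lpart c1 (glue c1 (hl, vl) (hr, vr)) = (hl, vl)"
  proof -
    have 1: "h i (k + c1) = hl i k" for i k
      by (cases "k = 0") (use hl0[of i] hrc[of i] in \<open>auto simp: h_def\<close>)
    have 2: "(0 < t \<and> v (t + c1) k) = vl t k" for t k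
      by (cases "t = 0") (use Lq(2)[of 0 k] in \<open>auto simp: v_def\<close>)
    show ?thesis unfolding g lpart_def fst_conv snd_conv using 1 2 by (simp add: fun_eq_iff)
  qed
  show "rpart c1 (glue c1 (hl, vl) (hr, vr)) = (hr, vr)"
  proof -
    have 1: "(h i k \<and> k \<le> c1) = hr i k" for i k
      by (cases "k \<le> c1") (use Rq(1)[of i k] in \<open>auto simp: h_def\<close>)
    have 2: "(v t k \<and> t \<le> c1) = vr t k" for t k
      by (cases "t \<le> c1") (use Rq(2)[of t k] in \<open>auto simp: v_def\<close>)
    show ?thesis unfolding g rpart_def fst_conv snd_conv using 1 2 by (simp add: fun_eq_iff)
  qed
qed

lemma glue_card:
  "card (six_vertex_states r (c1 + c2) L R T B) =
   (\<Sum>X\<in>Xs r. card (six_vertex_states r c2 L X (\<lambda>t. T (t + c1)) (\<lambda>t. B (t + c1))) * card (six_vertex_states r c1 X R T B))"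
proof -
  define P where "P = six_vertex_states r (c1 + c2) L R T B"
  define LX where "LX X = six_vertex_states r c2 L X (\<lambda>t. T (t + c1)) (\<lambda>t. B (t + c1))" for X
  define RX where "RX X = six_vertex_states r c1 X R T B" for X
  define F where "F s = (lpart c1 s, rpart c1 s)" for s
  have inj: "inj_on F P"
  proof
    fix s s' assume s: "s \<in> P" and s': "s' \<in> P" and eq: "F s = F s'"
    obtain h v where hv: "s = (h, v)" by (cases s)
    obtain h' v' where hv': "s' = (h', v')" by (cases s')
    have e1: "h i (k + c1) = h' i (k + c1)" "(0 < t \<and> v (t + c1) k) = (0 < t \<and> v' (t + c1) k)" for i k t
      using eq unfolding F_def hv hv' lpart_def by (auto simp: fun_eq_iff)
    have e2: "(h i k \<and> k \<le> c1) = (h' i k \<and> k \<le> c1)" "(v t k \<and> t \<le> c1) = (v' t k \<and> t \<le> c1)" for i k t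
      using eq unfolding F_def hv hv' rpart_def by (auto simp: fun_eq_iff)
    have "h i k = h' i k" for i k
    proof (cases "k \<le> c1")
      case True then show ?thesis using e2(1)[of i k] by simp
    next
      case False then show ?thesis using e1(1)[of i "k - c1"] by simp
    qed
    moreover have "v t k = v' t k" for t k
    proof (cases "t \<le> c1")
      case True then show ?thesis using e2(2)[of t k] by simp
    next
      case False then show ?thesis using e1(2)[of "t - c1" k] by simp
    qed
    ultimately show "s = s'" unfolding hv hv' by (simp add: fun_eq_iff)
  qed
  have img: "F ` P = (\<Union>X\<in>Xs r. LX X \<times> RX X)"
  proof
    show "F ` P \<subseteq> (\<Union>X\<in>Xs r. LX X \<times> RX X)"
    proof
      fix p assume "p \<in> F ` P"
      then obtain h v where hv: "(h, v) \<in> P" "p = F (h, v)" by auto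
      define X where "X = (\<lambda>i. 1 \<le> i \<and> i \<le> r \<and> h i c1)"
      have "X \<in> Xs r" unfolding X_def Xs_def by auto
      moreover have "p \<in> LX X \<times> RX X"
        using lpart_mem[of h v r c1 c2 L R T B] rpart_mem[of h v r c1 c2 L R T B] hv
        unfolding LX_def RX_def F_def P_def X_def by auto
      ultimately show "p \<in> (\<Union>X\<in>Xs r. LX X \<times> RX X)" by blast
    qed
  next
    show "(\<Union>X\<in>Xs r. LX X \<times> RX X) \<subseteq> F ` P"
    proof
      fix p assume "p \<in> (\<Union>X\<in>Xs r. LX X \<times> RX X)"
      then obtain X hl vl hr vr where X: "X \<in> Xs r" and p: "p = ((hl, vl), (hr, vr))"
        and l: "(hl, vl) \<in> LX X" and rr: "(hr, vr) \<in> RX X" by auto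
      note G = glue_mem[OF X l[unfolded LX_def] rr[unfolded RX_def]]
      have "p = F (glue c1 (hl, vl) (hr, vr))" unfolding F_def p G(2) G(3) by simp
      moreover have "glue c1 (hl, vl) (hr, vr) \<in> P" unfolding P_def by (rule G(1))
      ultimately show "p \<in> F ` P" by blast
    qed
  qed
  have disj: "(LX X \<times> RX X) \<inter> (LX Y \<times> RX Y) = {}" if "X \<in> Xs r" "Y \<in> Xs r" "X \<noteq> Y" for X Y
  proof (rule ccontr)
    assume "(LX X \<times> RX X) \<inter> (LX Y \<times> RX Y) \<noteq> {}"
    then obtain hl vl where a: "(hl, vl) \<in> LX X" "(hl, vl) \<in> LX Y" by auto
    have "X i = Y i" for i
    proof (cases "1 \<le> i \<and> i \<le> r")
      case True then show ?thesis using svD(4)[OF a(1)[unfolded LX_def], of i] svD(4)[OF a(2)[unfolded LX_def], of i] by simp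
    next
      case False then show ?thesis using that(1,2) unfolding Xs_def by auto
    qed
    then show False using that(3) by (simp add: fun_eq_iff)
  qed
  have "card P = card (F ` P)" using inj by (simp add: card_image)
  also have "\<dots> = card (\<Union>X\<in>Xs r. LX X \<times> RX X)" using img by simp
  also have "\<dots> = (\<Sum>X\<in>Xs r. card (LX X \<times> RX X))"
    by (rule card_UN_disjoint) (use finite_Xs disj in \<open>auto simp: LX_def RX_def intro: finite_cartesian_product finite_sv\<close>)
  also have "\<dots> = (\<Sum>X\<in>Xs r. card (LX X) * card (RX X))" by (simp add: card_cartesian_product)
  finally show ?thesis unfolding P_def LX_def RX_def .
qed

lemma row_lemma:
  fixes top bot hh :: "nat \<Rightarrow> bool"
  assumes vert: "\<And>t. 1 \<le> t \<Longrightarrow> t \<le> w \<Longrightarrow>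
      of_bool (\<not> top t) + of_bool (bot t) + of_bool (\<not> hh (t - 1)) + of_bool (hh t) = (2::nat)"
    and hw: "hh w" and a: "a \<le> w" and topa: "\<And>t. 1 \<le> t \<Longrightarrow> t \<le> w \<Longrightarrow> top t = (t = a)"
  shows "\<exists>b \<le> a. (\<forall>t. 1 \<le> t \<longrightarrow> t \<le> w \<longrightarrow> bot t = (t = b)) \<and> (\<forall>k \<le> w. (\<not> hh k) = (b \<le> k \<and> k < a))"
proof -
  have S: "\<exists>b \<le> a. (\<forall>t. w - d < t \<longrightarrow> t \<le> w \<longrightarrow> bot t = (t = b)) \<and>
              (\<forall>k. w - d \<le> k \<longrightarrow> k \<le> w \<longrightarrow> (\<not> hh k) = (b \<le> k \<and> k < a))" if "d \<le> w" for d
    using that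
  proof (induction d)
    case 0
    show ?case by (rule exI[of _ 0]) (use hw a in auto)
  next
    case (Suc d)
    then obtain b where b: "b \<le> a" "\<forall>t. w - d < t \<longrightarrow> t \<le> w \<longrightarrow> bot t = (t = b)"
      "\<forall>k. w - d \<le> k \<longrightarrow> k \<le> w \<longrightarrow> (\<not> hh k) = (b \<le> k \<and> k < a)" by auto
    define k where "k = w - d"
    have k: "1 \<le> k" "k \<le> w" "w - Suc d = k - 1" using Suc.prems unfolding k_def by auto
    have V: "of_bool (\<not> top k) + of_bool (bot k) + of_bool (\<not> hh (k - 1)) + of_bool (hh k) = (2::nat)"
      using vert k by auto
    have tk: "top k = (k = a)" using topa k by auto
    have hk: "(\<not> hh k) = (b \<le> k \<and> k < a)" using b(3) k unfolding k_def by auto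
    define b' where "b' = (if k < b then b else if bot k then k else 0)"
    have "b' \<le> a" using V tk hk b(1) k unfolding b'_def by (auto split: if_splits)
    moreover have "\<forall>t. k - 1 < t \<longrightarrow> t \<le> w \<longrightarrow> bot t = (t = b')"
    proof (intro allI impI)
      fix t assume t: "k - 1 < t" "t \<le> w"
      show "bot t = (t = b')"
      proof (cases "t = k")
        case True
        then show ?thesis using V tk hk b(1) k unfolding b'_def by (auto split: if_splits)
      next
        case False
        then have "bot t = (t = b)" using b(2) t unfolding k_def by auto
        then show ?thesis using False t unfolding b'_def by auto
      qed
    qed
    moreover have "\<forall>k'. k - 1 \<le> k' \<longrightarrow> k' \<le> w \<longrightarrow> (\<not> hh k') = (b' \<le> k' \<and> k' < a)"
    proof (intro allI impI)
      fix k' assume t: "k - 1 \<le> k'" "k' \<le> w"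
      show "(\<not> hh k') = (b' \<le> k' \<and> k' < a)"
      proof (cases "k' = k - 1")
        case True
        then show ?thesis using V tk hk b(1) k unfolding b'_def by (auto split: if_splits)
      next
        case False
        then have "(\<not> hh k') = (b \<le> k' \<and> k' < a)" using b(3) t unfolding k_def by auto
        then show ?thesis using False t b(1) unfolding b'_def by auto
      qed
    qed
    ultimately show ?case unfolding k(3) by blast
  qed
  from S[of w] show ?thesis by (simp add: Suc_le_eq)
qed

definition Hu :: "nat \<Rightarrow> nat \<Rightarrow> (nat \<Rightarrow> nat) \<Rightarrow> nat \<Rightarrow> nat \<Rightarrow> bool" where
  "Hu w r u = (\<lambda>i k. 1 \<le> i \<and> i \<le> r \<and> k \<le> w \<and> \<not> (u i \<le> k \<and> k < u (i - 1)))"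
definition Vu :: "nat \<Rightarrow> nat \<Rightarrow> (nat \<Rightarrow> nat) \<Rightarrow> nat \<Rightarrow> nat \<Rightarrow> bool" where
  "Vu w r u = (\<lambda>t k. 1 \<le> t \<and> t \<le> w \<and> k \<le> r \<and> t = u k)"
definition UX :: "nat \<Rightarrow> nat \<Rightarrow> (nat \<Rightarrow> bool) \<Rightarrow> (nat \<Rightarrow> nat) set" where
  "UX r w X = {u. u 0 = w \<and> (\<forall>i. u i \<le> w) \<and> (\<forall>i. r \<le> i \<longrightarrow> u i = 0) \<and>
     (\<forall>i. 1 \<le> i \<longrightarrow> i \<le> r \<longrightarrow> u i \<le> u (i - 1) \<and> X i = (\<not> (u i = 0 \<and> 0 < u (i - 1))))}"

lemma vert_arith:
  fixes a b j :: nat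
  assumes "b \<le> a" "1 \<le> j"
  shows "of_bool (\<not> j = a) + of_bool (j = b) + of_bool (\<not> \<not> (b \<le> j - 1 \<and> j - 1 < a)) + of_bool (\<not> (b \<le> j \<and> j < a)) = (2::nat)"
proof -
  consider "j < b" | "j = b" "b = a" | "j = b" "b < a" | "b < j" "j < a" | "j = a" "b < a" | "a < j"
    using assms by linarith
  then show ?thesis using assms by cases auto
qed

lemma Psi_mem:
  assumes u: "u \<in> UX r w X"
  shows "(Hu w r u, Vu w r u) \<in> six_vertex_states r w (\<lambda>_. True) X (\<lambda>t. t = w) (\<lambda>_. False)"
proof -
  have u0: "u 0 = w" and uw: "\<And>i. u i \<le> w" and ur: "\<And>i. r \<le> i \<Longrightarrow> u i = 0"
    and ud: "\<And>i. 1 \<le> i \<Longrightarrow> i \<le> r \<Longrightarrow> u i \<le> u (i - 1)"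
    and uX: "\<And>i. 1 \<le> i \<Longrightarrow> i \<le> r \<Longrightarrow> X i = (\<not> (u i = 0 \<and> 0 < u (i - 1)))"
    using u unfolding UX_def by auto
  show ?thesis
  proof (rule svI)
    fix i j assume ij: "1 \<le> i" "i \<le> r" "1 \<le> j" "j \<le> w"
    have d: "u i \<le> u (i - 1)" using ud ij by auto
    have e: "Vu w r u j (i - 1) = (j = u (i - 1))" "Vu w r u j i = (j = u i)"
      "Hu w r u i (j - 1) = (\<not> (u i \<le> j - 1 \<and> j - 1 < u (i - 1)))"
      "Hu w r u i j = (\<not> (u i \<le> j \<and> j < u (i - 1)))"
      unfolding Vu_def Hu_def using ij by auto
    show "of_bool (\<not> Vu w r u j (i - 1)) + of_bool (Vu w r u j i) + of_bool (\<not> Hu w r u i (j - 1)) + of_bool (Hu w r u i j) = (2::nat)"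
      unfolding e using vert_arith[OF d ij(3)] by simp
  next
    fix i assume i: "1 \<le> i" "i \<le> r"
    show "Hu w r u i w = True \<and> Hu w r u i 0 = X i"
      unfolding Hu_def using i uw[of "i - 1"] uX[OF i] by auto
  next
    fix j assume j: "1 \<le> j" "j \<le> w"
    show "Vu w r u j 0 = (j = w) \<and> Vu w r u j r = False"
      unfolding Vu_def using j u0 ur[of r] by auto
  qed (auto simp: Hu_def Vu_def)
qed

lemma umax:
  fixes w b :: nat
  assumes "\<And>t. 1 \<le> t \<Longrightarrow> t \<le> w \<Longrightarrow> v t i = (t = b)" "b \<le> w"
  shows "Max (insert 0 {t\<in>{1..w}. v t i}) = b"
proof (cases "b = 0")
  case True
  have "\<not> v t i" if "t \<in> {1..w}" for t using assms(1)[of t] that True by auto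
  then have e: "{t\<in>{1..w}. v t i} = {}" by auto
  show ?thesis unfolding e True by simp
next
  case False
  then have "{t\<in>{1..w}. v t i} = {b}" using assms by auto
  then show ?thesis by simp
qed

lemma umax_le: "Max (insert 0 {t\<in>{1..w}. v t i}) \<le> (w::nat)"
  by (subst Max_le_iff) auto

lemma left_sub:
  assumes hv: "(h, v) \<in> six_vertex_states r w (\<lambda>_. True) X (\<lambda>t. t = w) (\<lambda>_. False)"
  shows "(h, v) \<in> (\<lambda>u. (Hu w r u, Vu w r u)) ` UX r w X"
proof -
  note S = svD[OF hv]
  define u where "u i = Max (insert 0 {t\<in>{1..w}. v t i})" for i
  have uw: "u i \<le> w" for i unfolding u_def by (rule umax_le)
  have P: "\<forall>t. 1 \<le> t \<longrightarrow> t \<le> w \<longrightarrow> v t i = (t = u i)" if "i \<le> r" for i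
    using that
  proof (induction i)
    case 0
    have "u 0 = w" unfolding u_def by (rule umax) (use S(5) in auto)
    then show ?case using S(5) by auto
  next
    case (Suc i)
    have IH: "\<And>t. 1 \<le> t \<Longrightarrow> t \<le> w \<Longrightarrow> v t i = (t = u i)" using Suc by auto
    obtain b where b: "b \<le> u i" "\<forall>t. 1 \<le> t \<longrightarrow> t \<le> w \<longrightarrow> v t (Suc i) = (t = b)"
      using row_lemma[of w "\<lambda>t. v t i" "\<lambda>t. v t (Suc i)" "h (Suc i)" "u i"] S(7)[of "Suc i"] S(3)[of "Suc i"] Suc.prems IH uw
      by auto
    have "u (Suc i) = b" unfolding u_def by (rule umax) (use b uw[of i] in auto)
    then show ?case using b by auto
  qed
  have Q: "u i \<le> u (i - 1) \<and> (\<forall>k \<le> w. (\<not> h i k) = (u i \<le> k \<and> k < u (i - 1)))" if i: "1 \<le> i" "i \<le> r" for i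
  proof -
    have IH: "\<And>t. 1 \<le> t \<Longrightarrow> t \<le> w \<Longrightarrow> v t (i - 1) = (t = u (i - 1))" using P[of "i - 1"] i by auto
    obtain b where b: "b \<le> u (i - 1)" "\<forall>t. 1 \<le> t \<longrightarrow> t \<le> w \<longrightarrow> v t i = (t = b)"
       "\<forall>k \<le> w. (\<not> h i k) = (b \<le> k \<and> k < u (i - 1))"
      using row_lemma[of w "\<lambda>t. v t (i - 1)" "\<lambda>t. v t i" "h i" "u (i - 1)"] S(7)[of i] S(3)[of i] i IH uw
      by auto
    have "u i = b" unfolding u_def by (rule umax) (use b uw[of "i - 1"] in auto)
    then show ?thesis using b by auto
  qed
  have ur: "u i = 0" if "r \<le> i" for i
  proof -
    have "{t\<in>{1..w}. v t i} = {}"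
    proof (cases "i = r")
      case True then show ?thesis using S(6) by auto
    next
      case False then show ?thesis using S(2) that by fastforce
    qed
    then show ?thesis unfolding u_def by (metis Max_singleton)
  qed
  have u0: "u 0 = w" unfolding u_def by (rule umax) (use S(5) in auto)
  have uX: "X i = (\<not> (u i = 0 \<and> 0 < u (i - 1)))" if "1 \<le> i" "i \<le> r" for i
    using S(4)[OF that] Q[OF that] by auto
  have uU: "u \<in> UX r w X"
    unfolding UX_def using u0 uw ur Q uX by blast
  have "h = Hu w r u"
  proof (intro ext)
    fix i k show "h i k = Hu w r u i k"
    proof (cases "1 \<le> i \<and> i \<le> r \<and> k \<le> w")
      case True then show ?thesis using Q[of i] unfolding Hu_def by auto
    next
      case False then show ?thesis using S(1)[of i k] unfolding Hu_def by auto
    qed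
  qed
  moreover have "v = Vu w r u"
  proof (intro ext)
    fix t k show "v t k = Vu w r u t k"
    proof (cases "1 \<le> t \<and> t \<le> w \<and> k \<le> r")
      case True then show ?thesis using P[of k] unfolding Vu_def by auto
    next
      case False then show ?thesis using S(2)[of t k] unfolding Vu_def by auto
    qed
  qed
  ultimately show ?thesis using uU by blast
qed

lemma Psi_inj: "inj_on (\<lambda>u. (Hu w r u, Vu w r u)) (UX r w X)"
proof
  fix u u' assume u: "u \<in> UX r w X" and u': "u' \<in> UX r w X"
    and eq: "(Hu w r u, Vu w r u) = (Hu w r u', Vu w r u')"
  have V: "Vu w r u t k = Vu w r u' t k" for t k using eq by (simp add: fun_eq_iff)
  show "u = u'"
  proof
    fix k
    show "u k = u' k"
    proof (cases "r \<le> k")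
      case True then show ?thesis using u u' unfolding UX_def by auto
    next
      case False
      have a: "u k \<le> w" "u' k \<le> w" using u u' unfolding UX_def by auto
      show ?thesis
      proof (cases "u k = 0")
        case True
        show ?thesis
        proof (rule ccontr)
          assume "u k \<noteq> u' k"
          then show False using V[of "u' k" k] True a False unfolding Vu_def by auto
        qed
      next
        case nz: False
        then show ?thesis using V[of "u k" k] a False unfolding Vu_def by auto
      qed
    qed
  qed
qed

lemma card_left:
  "card (six_vertex_states r w (\<lambda>_. True) X (\<lambda>t. t = w) (\<lambda>_. False)) = card (UX r w X)"
proof -
  have 1: "six_vertex_states r w (\<lambda>_. True) X (\<lambda>t. t = w) (\<lambda>_. False) \<subseteq> (\<lambda>u. (Hu w r u, Vu w r u)) ` UX r w X"
  proof
    fix s assume s: "s \<in> six_vertex_states r w (\<lambda>_. True) X (\<lambda>t. t = w) (\<lambda>_. False)"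
    obtain h v where "s = (h, v)" by (cases s)
    then show "s \<in> (\<lambda>u. (Hu w r u, Vu w r u)) ` UX r w X" using left_sub[of h v] s by simp
  qed
  have 2: "(\<lambda>u. (Hu w r u, Vu w r u)) ` UX r w X \<subseteq> six_vertex_states r w (\<lambda>_. True) X (\<lambda>t. t = w) (\<lambda>_. False)"
    by (rule image_subsetI) (rule Psi_mem)
  have "six_vertex_states r w (\<lambda>_. True) X (\<lambda>t. t = w) (\<lambda>_. False) = (\<lambda>u. (Hu w r u, Vu w r u)) ` UX r w X"
    using 1 2 by (rule subset_antisym)
  then show ?thesis using card_image[OF Psi_inj] by simp
qed

definition Dset :: "nat \<Rightarrow> nat \<Rightarrow> (nat \<Rightarrow> nat) set" where
  "Dset L M = {u. u 0 = M \<and> (\<forall>i. 1 \<le> i \<and> i \<le> L \<longrightarrow> 1 \<le> u i \<and> u i \<le> u (i - 1)) \<and> (\<forall>i. L < i \<longrightarrow> u i = 0)}"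

definition consf :: "nat \<Rightarrow> (nat \<Rightarrow> nat) \<Rightarrow> nat \<Rightarrow> nat" where
  "consf M u = (\<lambda>i. if i = 0 then M else u (i - 1))"

lemma Dset_0: "Dset 0 M = {(\<lambda>i. if i = 0 then M else 0)}"
  unfolding Dset_def by (auto simp: fun_eq_iff)

lemma Dset_split_A:
  assumes "1 \<le> M"
  shows "{u \<in> Dset (Suc L) M. u 1 = M} = consf M ` Dset L M"
proof
  show "{u \<in> Dset (Suc L) M. u 1 = M} \<subseteq> consf M ` Dset L M"
  proof
    fix u assume u: "u \<in> {u \<in> Dset (Suc L) M. u 1 = M}"
    have "u = consf M (\<lambda>i. u (Suc i))" using u unfolding consf_def Dset_def by (auto simp: fun_eq_iff)
    moreover have "(\<lambda>i. u (Suc i)) \<in> Dset L M"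
    proof -
      have a: "u 0 = M" "\<And>i. 1 \<le> i \<Longrightarrow> i \<le> Suc L \<Longrightarrow> 1 \<le> u i \<and> u i \<le> u (i - 1)"
        "\<And>i. Suc L < i \<Longrightarrow> u i = 0" "u 1 = M" using u unfolding Dset_def by auto
      show ?thesis unfolding Dset_def using a(2)[of "Suc _"] a(3)[of "Suc _"] a(4) by auto
    qed
    ultimately show "u \<in> consf M ` Dset L M" by blast
  qed
next
  show "consf M ` Dset L M \<subseteq> {u \<in> Dset (Suc L) M. u 1 = M}"
  proof
    fix u assume "u \<in> consf M ` Dset L M"
    then obtain u' where u': "u' \<in> Dset L M" "u = consf M u'" by auto
    have a: "u' 0 = M" "\<And>i. 1 \<le> i \<Longrightarrow> i \<le> L \<Longrightarrow> 1 \<le> u' i \<and> u' i \<le> u' (i - 1)"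
        "\<And>i. L < i \<Longrightarrow> u' i = 0" using u'(1) unfolding Dset_def by auto
    have b: "1 \<le> u i \<and> u i \<le> u (i - 1)" if "1 \<le> i" "i \<le> Suc L" for i
    proof (cases "i = 1")
      case True then show ?thesis using a(1) assms unfolding u'(2) consf_def by simp
    next
      case False
      then have "1 \<le> i - 1" "i - 1 \<le> L" using that by auto
      then show ?thesis using a(2)[of "i - 1"] that False unfolding u'(2) consf_def by auto
    qed
    have c: "u i = 0" if "Suc L < i" for i using a(3)[of "i - 1"] that unfolding u'(2) consf_def by auto
    have d: "u 0 = M" "u 1 = M" using a(1) unfolding u'(2) consf_def by auto
    show "u \<in> {u \<in> Dset (Suc L) M. u 1 = M}"
      unfolding Dset_def using b c d by auto
  qed
qed

lemma consf_inj: "inj (consf M)"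
proof
  fix u u' assume "consf M u = consf M u'"
  then have "consf M u (Suc i) = consf M u' (Suc i)" for i by simp
  then have "u i = u' i" for i unfolding consf_def by simp
  then show "u = u'" by auto
qed

lemma Dset_split_B:
  assumes "2 \<le> M"
  shows "{u \<in> Dset (Suc L) M. u 1 < M} = (\<lambda>u. u(0 := M)) ` Dset (Suc L) (M - 1)"
proof
  show "{u \<in> Dset (Suc L) M. u 1 < M} \<subseteq> (\<lambda>u. u(0 := M)) ` Dset (Suc L) (M - 1)"
  proof
    fix u assume u: "u \<in> {u \<in> Dset (Suc L) M. u 1 < M}"
    have a: "u 0 = M" "\<And>i. 1 \<le> i \<Longrightarrow> i \<le> Suc L \<Longrightarrow> 1 \<le> u i \<and> u i \<le> u (i - 1)"
        "\<And>i. Suc L < i \<Longrightarrow> u i = 0" "u 1 < M" using u unfolding Dset_def by auto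
    have "u = (u(0 := M - 1))(0 := M)" using a(1) by auto
    moreover have "u(0 := M - 1) \<in> Dset (Suc L) (M - 1)"
    proof -
      have h1: "1 \<le> (u(0 := M - 1)) i \<and> (u(0 := M - 1)) i \<le> (u(0 := M - 1)) (i - 1)" if "1 \<le> i" "i \<le> Suc L" for i
        using a(2)[OF that] a(4) that by (cases "i = 1") auto
      have h2: "\<forall>i. Suc L < i \<longrightarrow> (u(0 := M - 1)) i = 0" using a(3) by simp
      have h0: "(u(0 := M - 1)) 0 = M - 1" by simp
      show ?thesis unfolding Dset_def mem_Collect_eq using h0 h1 h2 by blast
    qed
    ultimately show "u \<in> (\<lambda>u. u(0 := M)) ` Dset (Suc L) (M - 1)" by blast
  qed
next
  show "(\<lambda>u. u(0 := M)) ` Dset (Suc L) (M - 1) \<subseteq> {u \<in> Dset (Suc L) M. u 1 < M}"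
  proof
    fix u assume "u \<in> (\<lambda>u. u(0 := M)) ` Dset (Suc L) (M - 1)"
    then obtain u' where u': "u' \<in> Dset (Suc L) (M - 1)" "u = u'(0 := M)" by auto
    have a: "u' 0 = M - 1" "\<And>i. 1 \<le> i \<Longrightarrow> i \<le> Suc L \<Longrightarrow> 1 \<le> u' i \<and> u' i \<le> u' (i - 1)"
        "\<And>i. Suc L < i \<Longrightarrow> u' i = 0" using u'(1) unfolding Dset_def by auto
    have b: "1 \<le> u i \<and> u i \<le> u (i - 1)" if "1 \<le> i" "i \<le> Suc L" for i
      using a(2)[OF that] a(1) that unfolding u'(2) by (cases "i = 1") auto
    have c: "u 1 < M" using a(2)[of 1] a(1) assms unfolding u'(2) by auto
    have d: "u 0 = M" "\<forall>i. Suc L < i \<longrightarrow> u i = 0" using a(3) unfolding u'(2) by auto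
    show "u \<in> {u \<in> Dset (Suc L) M. u 1 < M}"
      unfolding Dset_def mem_Collect_eq using b c d by blast
  qed
qed

lemma upd0_inj: "inj_on (\<lambda>u. u(0 := M)) (Dset L N)"
proof
  fix u u' assume a: "u \<in> Dset L N" "u' \<in> Dset L N" "u(0 := M) = u'(0 := M)"
  have "u i = u' i" for i
  proof (cases "i = 0")
    case True then show ?thesis using a(1,2) unfolding Dset_def by simp
  next
    case False
    have "(u(0 := M)) i = (u'(0 := M)) i" using a(3) by simp
    then show ?thesis using False by simp
  qed
  then show "u = u'" by auto
qed

lemma finite_Dset: "finite (Dset L M)"
proof -
  have "Dset L M \<subseteq> {u. \<forall>i. i \<notin> {0..L} \<longrightarrow> u i = 0}" unfolding Dset_def by auto
  moreover have "Dset L M \<subseteq> {u. \<forall>i. u i \<in> {0..M}}"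
  proof
    fix u assume u: "u \<in> Dset L M"
    have "u i \<le> M" for i
    proof (induction i)
      case 0 then show ?case using u unfolding Dset_def by auto
    next
      case (Suc i)
      show ?case
      proof (cases "Suc i \<le> L")
        case True
        then have "u (Suc i) \<le> u i" using u unfolding Dset_def by fastforce
        then show ?thesis using Suc.IH by simp
      next
        case False then show ?thesis using u unfolding Dset_def by simp
      qed
    qed
    then show "u \<in> {u. \<forall>i. u i \<in> {0..M}}" by auto
  qed
  ultimately have "Dset L M \<subseteq> {f. \<forall>x. (x \<in> {0..L} \<longrightarrow> f x \<in> {0..M}) \<and> (x \<notin> {0..L} \<longrightarrow> f x = 0)}" by blast
  moreover have "finite {f. \<forall>x. (x \<in> {0..L} \<longrightarrow> f x \<in> {0..M}) \<and> (x \<notin> {0..L} \<longrightarrow> f x = (0::nat))}"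
    by (rule finite_set_of_finite_funs) auto
  ultimately show ?thesis by (rule finite_subset)
qed

lemma Dset_split:
  "Dset (Suc L) M = {u \<in> Dset (Suc L) M. u 1 = M} \<union> {u \<in> Dset (Suc L) M. u 1 < M}"
proof -
  have "u 1 \<le> M" if "u \<in> Dset (Suc L) M" for u using that unfolding Dset_def by fastforce
  then show ?thesis by fastforce
qed

lemma card_Dset: "1 \<le> M \<Longrightarrow> card (Dset L M) = (M - 1 + L) choose L"
proof (induction L arbitrary: M)
  case 0
  then show ?case by (simp add: Dset_0)
next
  case (Suc L)
  have A: "card {u \<in> Dset (Suc L) M. u 1 = M} = (M - 1 + L) choose L" if "1 \<le> M" for M
  proof -
    have "card {u \<in> Dset (Suc L) M. u 1 = M} = card (consf M ` Dset L M)" using Dset_split_A[OF that] by simp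
    also have "\<dots> = card (Dset L M)" by (rule card_image) (rule inj_on_subset[OF consf_inj], simp)
    finally show ?thesis using Suc.IH[OF that] by simp
  qed
  have fin: "finite {u \<in> Dset (Suc L) M. P u}" for M P using finite_Dset by simp
  have main: "card (Dset (Suc L) (Suc M')) = (M' + Suc L) choose (Suc L)" for M'
  proof (induction M')
    case 0
    have "u 1 = Suc 0" if "u \<in> Dset (Suc L) (Suc 0)" for u using that unfolding Dset_def by fastforce
    then have "Dset (Suc L) (Suc 0) = {u \<in> Dset (Suc L) (Suc 0). u 1 = Suc 0}" by blast
    then have "card (Dset (Suc L) (Suc 0)) = card {u \<in> Dset (Suc L) (Suc 0). u 1 = Suc 0}" by simp
    then show ?case using A[of "Suc 0"] by simp
  next
    case (Suc M'')
    have B: "card {u \<in> Dset (Suc L) (Suc (Suc M'')). u 1 < Suc (Suc M'')} = card (Dset (Suc L) (Suc M''))"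
    proof -
      have "card {u \<in> Dset (Suc L) (Suc (Suc M'')). u 1 < Suc (Suc M'')} = card ((\<lambda>u. u(0 := Suc (Suc M''))) ` Dset (Suc L) (Suc (Suc M'') - 1))"
        using Dset_split_B[of "Suc (Suc M'')" L] by simp
      also have "\<dots> = card (Dset (Suc L) (Suc M''))" by (simp add: card_image upd0_inj)
      finally show ?thesis .
    qed
    have "card (Dset (Suc L) (Suc (Suc M''))) = card {u \<in> Dset (Suc L) (Suc (Suc M'')). u 1 = Suc (Suc M'')} + card {u \<in> Dset (Suc L) (Suc (Suc M'')). u 1 < Suc (Suc M'')}"
      by (subst Dset_split) (rule card_Un_disjoint[OF fin fin], auto)
    also have "\<dots> = ((Suc M'' + L) choose L) + ((M'' + Suc L) choose (Suc L))" using A[of "Suc (Suc M'')"] B Suc.IH by simp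
    also have "\<dots> = (Suc M'' + Suc L) choose (Suc L)" by simp
    finally show ?case .
  qed
  obtain M' where "M = Suc M'" using Suc.prems by (cases M) auto
  then show ?case using main[of M'] by simp
qed

definition Xj :: "nat \<Rightarrow> nat \<Rightarrow> nat \<Rightarrow> bool" where
  "Xj r j = (\<lambda>i. 1 \<le> i \<and> i \<le> r \<and> i \<noteq> j)"

lemma UX_zero_after:
  assumes u: "u \<in> UX r w X" and j: "u j = 0"
  shows "u (j + d) = 0"
proof (induction d)
  case 0 then show ?case using j by simp
next
  case (Suc d)
  show ?case
  proof (cases "j + Suc d \<le> r")
    case True
    then have "u (j + Suc d) \<le> u (j + Suc d - 1)" using u unfolding UX_def by auto
    then show ?thesis using Suc.IH by simp
  next
    case False then show ?thesis using u unfolding UX_def by auto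
  qed
qed

lemma UX_shape:
  assumes w: "1 \<le> w" and X: "X \<in> Xs r" and u: "u \<in> UX r w X"
  shows "\<exists>j\<in>{1..r}. X = Xj r j"
proof -
  have u0: "u 0 = w" and ur: "u r = 0" using u unfolding UX_def by auto
  define j where "j = (LEAST i. u i = 0)"
  have uj: "u j = 0" unfolding j_def using ur by (rule LeastI)
  have jr: "j \<le> r" unfolding j_def using ur by (rule Least_le)
  have lt: "u i \<noteq> 0" if "i < j" for i using not_less_Least[of i "\<lambda>i. u i = 0"] that unfolding j_def by blast
  have j1: "1 \<le> j" using uj u0 w by (cases j) auto
  have ge: "u i = 0" if "j \<le> i" for i using UX_zero_after[OF u uj, of "i - j"] that by simp
  have "X i = Xj r j i" for i
  proof (cases "1 \<le> i \<and> i \<le> r")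
    case True
    then have Xi: "X i = (\<not> (u i = 0 \<and> 0 < u (i - 1)))" using u unfolding UX_def by auto
    show ?thesis
    proof (cases "i < j")
      case True then show ?thesis using Xi lt[of i] \<open>1 \<le> i \<and> i \<le> r\<close> unfolding Xj_def by auto
    next
      case False
      show ?thesis
      proof (cases "i = j")
        case True then show ?thesis using Xi uj lt[of "j - 1"] j1 unfolding Xj_def by auto
      next
        case False
        then have "u (i - 1) = 0" using ge \<open>\<not> i < j\<close> by auto
        then show ?thesis using Xi False \<open>1 \<le> i \<and> i \<le> r\<close> unfolding Xj_def by auto
      qed
    qed
  next
    case False then show ?thesis using X unfolding Xs_def Xj_def by auto
  qed
  then show ?thesis using j1 jr by (auto simp: fun_eq_iff)
qed

lemma UX_Xj:
  assumes w: "1 \<le> w" and j: "1 \<le> j" "j \<le> r"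
  shows "UX r w (Xj r j) = Dset (j - 1) w"
proof
  show "UX r w (Xj r j) \<subseteq> Dset (j - 1) w"
  proof
    fix u assume u: "u \<in> UX r w (Xj r j)"
    have u0: "u 0 = w" using u unfolding UX_def by auto
    have ud: "\<And>i. 1 \<le> i \<Longrightarrow> i \<le> r \<Longrightarrow> u i \<le> u (i - 1)"
      and uX: "\<And>i. 1 \<le> i \<Longrightarrow> i \<le> r \<Longrightarrow> Xj r j i = (\<not> (u i = 0 \<and> 0 < u (i - 1)))"
      using u unfolding UX_def by auto
    have pos: "1 \<le> u i" if "i < j" for i
      using that
    proof (induction i)
      case 0 then show ?case using u0 w by simp
    next
      case (Suc i)
      then have "1 \<le> u i" by simp
      moreover have "Xj r j (Suc i)" using Suc.prems j unfolding Xj_def by auto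
      ultimately show ?case using uX[of "Suc i"] Suc.prems j by auto
    qed
    have uj: "u j = 0" using uX[OF j] unfolding Xj_def by auto
    have ge: "u i = 0" if "j \<le> i" for i using UX_zero_after[OF u uj, of "i - j"] that by simp
    have "\<forall>i. 1 \<le> i \<and> i \<le> j - 1 \<longrightarrow> 1 \<le> u i \<and> u i \<le> u (i - 1)"
      using pos ud j by auto
    moreover have "\<forall>i. j - 1 < i \<longrightarrow> u i = 0" using ge by auto
    ultimately show "u \<in> Dset (j - 1) w" unfolding Dset_def using u0 by blast
  qed
next
  show "Dset (j - 1) w \<subseteq> UX r w (Xj r j)"
  proof
    fix u assume u: "u \<in> Dset (j - 1) w"
    have u0: "u 0 = w" and a: "\<And>i. 1 \<le> i \<Longrightarrow> i \<le> j - 1 \<Longrightarrow> 1 \<le> u i \<and> u i \<le> u (i - 1)"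
      and z: "\<And>i. j - 1 < i \<Longrightarrow> u i = 0" using u unfolding Dset_def by auto
    have uw: "u i \<le> w" for i
    proof (induction i)
      case 0 then show ?case using u0 by simp
    next
      case (Suc i) then show ?case using a[of "Suc i"] z[of "Suc i"] by (cases "Suc i \<le> j - 1") auto
    qed
    have pos: "1 \<le> u i" if "i < j" for i
      using a[of i] u0 w that by (cases "i = 0") auto
    have ur: "\<forall>i. r \<le> i \<longrightarrow> u i = 0" using z j by auto
    have rest: "u i \<le> u (i - 1) \<and> Xj r j i = (\<not> (u i = 0 \<and> 0 < u (i - 1)))" if "1 \<le> i" "i \<le> r" for i
    proof (cases "i < j")
      case True
      then have "i \<le> j - 1" by simp
      then show ?thesis using a[of i] True that unfolding Xj_def by auto
    next
      case False
      show ?thesis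
      proof (cases "i = j")
        case True
        then show ?thesis using z[of i] pos[of "i - 1"] that unfolding Xj_def by auto
      next
        case False
        then have "j - 1 < i - 1" "j - 1 < i" using \<open>\<not> i < j\<close> j by auto
        then show ?thesis using z[of i] z[of "i - 1"] that unfolding Xj_def by auto
      qed
    qed
    show "u \<in> UX r w (Xj r j)" unfolding UX_def using u0 uw ur rest by blast
  qed
qed

theorem lemma3:
  fixes n :: nat and lam :: "nat \<Rightarrow> nat"
  assumes "n \<ge> 2" and "is_partition n lam"
  shows "A_count lam n =
    (\<Sum>j = 1..n. ((lam 1 - lam 2 + j - 1) choose (lam 1 - lam 2)) * R_count n lam j)"
proof -
  define m where "m = lam 1 - lam 2"
  define w where "w = m + 1"
  define c where "c = n + lam 2 - 1"
  define T where "T = (\<lambda>i. i \<in> top_up n lam)"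
  have p1: "lam 2 \<le> lam 1" using assms unfolding is_partition_def by (metis Suc_1 Suc_le_eq le_refl)
  have p2: "lam k \<le> lam 2" if "2 \<le> k" "k \<le> n" for k
    using that
  proof (induction k)
    case 0 then show ?case by simp
  next
    case (Suc k)
    show ?case
    proof (cases "k = 1")
      case True then show ?thesis by (simp add: numeral_2_eq_2)
    next
      case False
      then have "2 \<le> k" "1 \<le> k" "k < n" using Suc.prems by auto
      then have "lam (Suc k) \<le> lam k" using assms(2) unfolding is_partition_def by auto
      then show ?thesis using Suc.IH \<open>2 \<le> k\<close> Suc.prems by simp
    qed
  qed
  have N: "n + lam 1 = c + w" unfolding c_def w_def m_def using p1 assms(1) by simp
  have w1: "1 \<le> w" unfolding w_def by simp
  have Tw: "T (t + c) = (t = w)" if "1 \<le> t" "t \<le> w" for t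
  proof
    assume "T (t + c)"
    then obtain k where k: "1 \<le> k" "k \<le> n" "t + c = lam k + n + 1 - k" unfolding T_def top_up_def by auto
    show "t = w"
    proof (cases "k = 1")
      case True then show ?thesis using k N by simp
    next
      case False
      then have "lam k \<le> lam 2" using p2 k by simp
      then have "lam k + n + 1 - k \<le> c" using False k assms(1) unfolding c_def by simp
      then show ?thesis using k that by simp
    qed
  next
    assume "t = w"
    then have "t + c = lam 1 + n + 1 - 1" using N by simp
    then show "T (t + c)" unfolding T_def top_up_def using assms(1) by force
  qed
  have "A_count lam n = card (six_vertex_states n (c + w) (\<lambda>_. True) (\<lambda>_. False) T (\<lambda>_. False))"
    unfolding A_count_def T_def N ..
  also have "\<dots> = (\<Sum>X\<in>Xs n. card (six_vertex_states n w (\<lambda>_. True) X (\<lambda>t. T (t + c)) (\<lambda>_. False)) *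
                     card (six_vertex_states n c X (\<lambda>_. False) T (\<lambda>_. False)))"
    by (rule glue_card)
  also have "\<dots> = (\<Sum>X\<in>Xs n. card (UX n w X) * card (six_vertex_states n c X (\<lambda>_. False) T (\<lambda>_. False)))"
  proof (rule sum.cong[OF refl])
    fix X
    have "six_vertex_states n w (\<lambda>_. True) X (\<lambda>t. T (t + c)) (\<lambda>_. False) = six_vertex_states n w (\<lambda>_. True) X (\<lambda>t. t = w) (\<lambda>_. False)"
      by (rule sv_cong) (auto simp: Tw)
    then show "card (six_vertex_states n w (\<lambda>_. True) X (\<lambda>t. T (t + c)) (\<lambda>_. False)) *
                     card (six_vertex_states n c X (\<lambda>_. False) T (\<lambda>_. False)) =
               card (UX n w X) * card (six_vertex_states n c X (\<lambda>_. False) T (\<lambda>_. False))"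
      using card_left by simp
  qed
  also have "\<dots> = (\<Sum>X\<in>Xj n ` {1..n}. card (UX n w X) * card (six_vertex_states n c X (\<lambda>_. False) T (\<lambda>_. False)))"
  proof (rule sum.mono_neutral_right[OF finite_Xs])
    show "Xj n ` {1..n} \<subseteq> Xs n" unfolding Xj_def Xs_def by auto
    show "\<forall>X\<in>Xs n - Xj n ` {1..n}. card (UX n w X) * card (six_vertex_states n c X (\<lambda>_. False) T (\<lambda>_. False)) = 0"
    proof
      fix X assume X: "X \<in> Xs n - Xj n ` {1..n}"
      have "UX n w X = {}"
      proof (rule ccontr)
        assume "UX n w X \<noteq> {}"
        then obtain u where "u \<in> UX n w X" by auto
        then obtain j where "j \<in> {1..n}" "X = Xj n j" using UX_shape[OF w1] X by blast
        then show False using X by auto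
      qed
      then show "card (UX n w X) * card (six_vertex_states n c X (\<lambda>_. False) T (\<lambda>_. False)) = 0" by simp
    qed
  qed
  also have "\<dots> = (\<Sum>j = 1..n. card (UX n w (Xj n j)) * card (six_vertex_states n c (Xj n j) (\<lambda>_. False) T (\<lambda>_. False)))"
  proof (rule sum.reindex[unfolded comp_def])
    show "inj_on (Xj n) {1..n}"
    proof
      fix j j' assume j: "j \<in> {1..n}" "j' \<in> {1..n}" "Xj n j = Xj n j'"
      then have "Xj n j j = Xj n j' j" by simp
      then show "j = j'" using j unfolding Xj_def by auto
    qed
  qed
  also have "\<dots> = (\<Sum>j = 1..n. ((lam 1 - lam 2 + j - 1) choose (lam 1 - lam 2)) * R_count n lam j)"
  proof (rule sum.cong[OF refl])
    fix j assume j: "j \<in> {1..n}"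
    have "card (UX n w (Xj n j)) = card (Dset (j - 1) w)" using UX_Xj[OF w1] j by simp
    also have "\<dots> = (m + (j - 1)) choose (j - 1)" using card_Dset[OF w1] unfolding w_def by simp
    also have "\<dots> = (m + j - 1) choose m"
    proof -
      have j1: "1 \<le> j" using j by simp
      have e1: "m + (j - 1) = m + j - 1" "m + j - 1 - m = j - 1" using j by auto
      have "(m + j - 1) choose m = (m + j - 1) choose (m + j - 1 - m)" using j1 by (intro binomial_symmetric) linarith
      then show ?thesis unfolding e1 by simp
    qed
    finally have f1: "card (UX n w (Xj n j)) = (lam 1 - lam 2 + j - 1) choose (lam 1 - lam 2)" unfolding m_def .
    have f2: "six_vertex_states n c (Xj n j) (\<lambda>_. False) T (\<lambda>_. False) = six_vertex_states n c (\<lambda>i. i \<noteq> j) (\<lambda>_. False) T (\<lambda>_. False)"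
      by (rule sv_cong) (auto simp: Xj_def)
    have f3: "card (six_vertex_states n c (Xj n j) (\<lambda>_. False) T (\<lambda>_. False)) = R_count n lam j"
      unfolding f2 unfolding R_count_def c_def T_def ..
    show "card (UX n w (Xj n j)) * card (six_vertex_states n c (Xj n j) (\<lambda>_. False) T (\<lambda>_. False)) =
          ((lam 1 - lam 2 + j - 1) choose (lam 1 - lam 2)) * R_count n lam j"
      unfolding f1 f3 ..
  qed
  finally show ?thesis .
qed

end
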